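(* Under the setting below, suppose the index sets of Algorithm BC satisfy the randomized sampling requirement. Then almost surely: (i) $\sum_k\|\bm x^k-\bm z^k\|^2<\infty$ (in particular $\|\bm x^k-\bm z^k\|\to0$); (ii) $\Phi(\bm z^k)\to\Phi_\star$, where $\Phi_\star:=\lim_k\Phi^{\mathrm{FB}}_\Gamma(\bm x^k)$ (a finite limit with $\Phi_\star\ge\min\Phi$); (iii) $(\bm x^k)$ and $(\bm z^k)$ have the same cluster points, every such cluster point $\bm x^\star$ satisfies $0\in\hat\partial\Phi(\bm x^\star)$, and $\Phi(\bm x^\star)=\Phi^{\mathrm{FB}}_\Gamma(\bm x^\star)=\Phi_\star$.
   Context: Setting: $N\ge1$, $n=\sum_{i=1}^N n_i$, $\bm x=(x_1,\dots,x_N)$ with $x_i\in\mathbb R^{n_i}$; $\Phi=F+G$ with $F(\bm x)=\frac1N\sum_i f_i(x_i)$, each $f_i:\mathbb R^{n_i}\to\mathbb R$ differentiable with $L_{f_i}$-Lipschitz gradient, $G:\mathbb R^n\to\mathbb R\cup\{+\infty\}$ proper lsc, $\arg\min\Phi\ne\emptyset$. $\gamma_i\in(0,N/L_{f_i})$, $\Gamma=\operatorname{blockdiag}(\gamma_1I_{n_1},\dots,\gamma_NI_{n_N})$, $\|x\|_V^2=\langle x,Vx\rangle$, $\operatorname{prox}_G^{V}(u)=\arg\min_w\{G(w)+\frac12\|w-u\|_V^2\}$, $\mathbf T(\bm x)=\operatorname{prox}_G^{\Gamma^{-1}}(\bm x-\Gamma\nabla F(\bm x))$. Forward-backward envelope: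 $\Phi^{\mathrm{FB}}_\Gamma(\bm x):=\inf_{\bm w}\{F(\bm x)+\langle\nabla F(\bm x),\bm w-\bm x\rangle+G(\bm w)+\frac12\|\bm w-\bm x\|^2_{\Gamma^{-1}}\}$. Algorithm BC: given $\bm x^0\in\mathbb R^n$, for $k=0,1,\dots$: pick $\bm z^k\in\mathbf T(\bm x^k)$; select $I^{k+1}\subseteq[N]$; set $x_i^{k+1}=z_i^k$ for $i\in I^{k+1}$ and $x_i^{k+1}=x_i^k$ otherwise. Randomized sampling requirement: there exist $p_1,\dots,p_N>0$ such that at every iteration, conditionally on the past, $\mathbb P(i\in I^{k+1})\ge p_i$ for every $i\in[N]$ (several indices may be selected at once; the $p_i$ need not sum to one). $\hat\partial$ denotes the regular (Fréchet) subdifferential. *)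

theory Defs
  imports "HOL-Analysis.Analysis" "HOL-Probability.Probability"
begin

text \<open>Block structure: coordinates of type 'n, blocks of type 'b (N = CARD('b)),
  the block of coordinate j is blk j.  Step sizes gam :: 'b => real give
  Gamma = blockdiag(gam_1 I, ..., gam_N I).\<close>

definition blk_proj :: "('n \<Rightarrow> 'b) \<Rightarrow> 'b \<Rightarrow> real^'n \<Rightarrow> real^'n" where
  "blk_proj blk i x = (\<chi> j. if blk j = i then x $ j else 0)"

definition Gam_mul :: "('n::finite \<Rightarrow> 'b) \<Rightarrow> ('b \<Rightarrow> real) \<Rightarrow> real^'n \<Rightarrow> real^'n" where
  "Gam_mul blk gam v = (\<chi> j. gam (blk j) * v $ j)"

definition Gam_inv_norm2 :: "('n::finite \<Rightarrow> 'b) \<Rightarrow> ('b \<Rightarrow> real) \<Rightarrow> real^'n \<Rightarrow> real" where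
  "Gam_inv_norm2 blk gam w = (\<Sum>j\<in>UNIV. (w $ j)^2 / gam (blk j))"

definition Fsep :: "('b::finite \<Rightarrow> real^'n \<Rightarrow> real) \<Rightarrow> real^'n \<Rightarrow> real" where
  "Fsep f x = (\<Sum>i\<in>UNIV. f i x) / real CARD('b)"

definition gradFsep :: "('b::finite \<Rightarrow> real^'n \<Rightarrow> real^'n) \<Rightarrow> real^'n \<Rightarrow> real^'n" where
  "gradFsep g x = (1 / real CARD('b)) *\<^sub>R (\<Sum>i\<in>UNIV. g i x)"

text \<open>prox_G^{Gamma^{-1}}(u) as a (possibly empty / multivalued) argmin set.\<close>
definition prox_set :: "(real^'n::finite \<Rightarrow> ereal) \<Rightarrow> ('n \<Rightarrow> 'b) \<Rightarrow> ('b \<Rightarrow> real)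
    \<Rightarrow> real^'n \<Rightarrow> (real^'n) set" where
  "prox_set G blk gam u =
     {w. \<forall>v. G w + ereal (Gam_inv_norm2 blk gam (w - u) / 2)
              \<le> G v + ereal (Gam_inv_norm2 blk gam (v - u) / 2)}"

definition Tmap :: "('b::finite \<Rightarrow> real^'n::finite \<Rightarrow> real^'n) \<Rightarrow> (real^'n \<Rightarrow> ereal)
    \<Rightarrow> ('n \<Rightarrow> 'b) \<Rightarrow> ('b \<Rightarrow> real) \<Rightarrow> real^'n \<Rightarrow> (real^'n) set" where
  "Tmap g G blk gam x = prox_set G blk gam (x - Gam_mul blk gam (gradFsep g x))"

definition FBE :: "('b::finite \<Rightarrow> real^'n::finite \<Rightarrow> real) \<Rightarrow> ('b \<Rightarrow> real^'n \<Rightarrow> real^'n)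
    \<Rightarrow> (real^'n \<Rightarrow> ereal) \<Rightarrow> ('n \<Rightarrow> 'b) \<Rightarrow> ('b \<Rightarrow> real) \<Rightarrow> real^'n \<Rightarrow> ereal" where
  "FBE f g G blk gam x =
     (INF w. ereal (Fsep f x + inner (gradFsep g x) (w - x) + Gam_inv_norm2 blk gam (w - x) / 2) + G w)"

definition lsc :: "('a::topological_space \<Rightarrow> ereal) \<Rightarrow> bool" where
  "lsc G \<longleftrightarrow> (\<forall>x. G x \<le> Liminf (at x) G)"

definition frechet_subdiff :: "('a::real_inner \<Rightarrow> ereal) \<Rightarrow> 'a \<Rightarrow> 'a set" where
  "frechet_subdiff P x =
     {v. \<bar>P x\<bar> \<noteq> \<infinity> \<and>
         (\<forall>e>0. \<exists>d>0. \<forall>y. norm (y - x) < d \<longrightarrow>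
              P x + ereal (inner v (y - x) - e * norm (y - x)) \<le> P y)}"

definition cluster_points :: "(nat \<Rightarrow> 'a::topological_space) \<Rightarrow> 'a set" where
  "cluster_points s = {a. \<exists>r. strict_mono r \<and> (s \<circ> r) \<longlonglongrightarrow> a}"

end

theory Submission
  imports Defs
begin

lemma cond_ind_bound:
  fixes M F :: "'w measure" and H :: "'w \<Rightarrow> real" and A :: "'w set"
  assumes P: "prob_space M" and sub: "subalgebra M F"
    and Hm: "H \<in> borel_measurable F" and A: "A \<in> sets M"
    and samp: "AE w in M. p \<le> real_cond_exp M F (indicator A) w" and p: "0 < p"
  shows "ennreal p * (\<integral>\<^sup>+ w. ennreal (H w) \<partial>M) \<le> (\<integral>\<^sup>+ w. ennreal (H w) * indicator A w \<partial>M)"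
proof -
  interpret prob_space M by (rule P)
  interpret fms: finite_measure_subalgebra M F by unfold_locales (rule sub)
  have HM: "H \<in> borel_measurable M" by (rule measurable_from_subalg[OF sub Hm])
  have ae: "AE w in M. ennreal p \<le> nn_cond_exp M F (\<lambda>x. ennreal (indicator A x)) w"
    using samp
  proof (rule eventually_mono)
    fix w assume h: "p \<le> real_cond_exp M F (indicator A) w"
    let ?a = "nn_cond_exp M F (\<lambda>x. ennreal (indicator A x)) w"
    have "p \<le> enn2real ?a"
      using h enn2real_nonneg[of "nn_cond_exp M F (\<lambda>x. ennreal (- indicator A x)) w"]
      unfolding real_cond_exp_def by linarith
    moreover hence "?a \<noteq> \<top>" using p by auto
    ultimately show "ennreal p \<le> ?a"
      by (metis ennreal_enn2real ennreal_leI top.not_eq_extremum)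
  qed
  have "ennreal p * (\<integral>\<^sup>+ w. ennreal (H w) \<partial>M) = (\<integral>\<^sup>+ w. ennreal (H w) * ennreal p \<partial>M)"
    using HM by (subst nn_integral_multc) (auto simp: mult.commute)
  also have "\<dots> \<le> (\<integral>\<^sup>+ w. ennreal (H w) * nn_cond_exp M F (\<lambda>x. ennreal (indicator A x)) w \<partial>M)"
    by (rule nn_integral_mono_AE, rule eventually_mono[OF ae]) (rule mult_left_mono, auto)
  also have "\<dots> = (\<integral>\<^sup>+ w. ennreal (H w) * ennreal (indicator A w) \<partial>M)"
    by (rule fms.nn_cond_exp_intg) (use Hm A in auto)
  also have "\<dots> = (\<integral>\<^sup>+ w. ennreal (H w) * indicator A w \<partial>M)" by (simp add: ennreal_indicator)
  finally show ?thesis .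
qed


lemma prob_summable:
  fixes M :: "'w measure" and Fk :: "nat \<Rightarrow> 'w measure"
    and I :: "nat \<Rightarrow> 'w \<Rightarrow> 'b::finite set" and H :: "nat \<Rightarrow> 'b \<Rightarrow> 'w \<Rightarrow> real"
    and p :: "'b \<Rightarrow> real" and B :: real
  assumes P: "prob_space M" and sub: "\<And>k. subalgebra M (Fk k)"
    and Hm: "\<And>k i. H k i \<in> borel_measurable (Fk k)" and Hnn: "\<And>k i w. 0 \<le> H k i w"
    and Im: "\<And>k. I (Suc k) \<in> measurable (Fk (Suc k)) (count_space UNIV)"
    and samp: "\<And>k i. AE w in M. p i \<le> real_cond_exp M (Fk k) (indicator {w \<in> space M. i \<in> I (Suc k) w}) w"
    and p_pos: "\<And>i. 0 < p i"
    and bnd: "\<And>w n. w \<in> space M \<Longrightarrow> (\<Sum>k<n. \<Sum>i\<in>UNIV. if i \<in> I (Suc k) w then H k i w else 0) \<le> B"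
  shows "AE w in M. summable (\<lambda>k. \<Sum>i\<in>UNIV. H k i w)"
proof -
  interpret prob_space M by (rule P)
  define A where "A k i = {w \<in> space M. i \<in> I (Suc k) w}" for k i
  have A: "A k i \<in> sets M" for k i
  proof -
    have "I (Suc k) -` {S. i \<in> S} \<inter> space (Fk (Suc k)) \<in> sets (Fk (Suc k))"
      by (rule measurable_sets[OF Im]) simp
    moreover have "I (Suc k) -` {S. i \<in> S} \<inter> space (Fk (Suc k)) = A k i"
      using sub[of "Suc k"] by (auto simp: A_def subalgebra_def)
    ultimately show ?thesis using sub[of "Suc k"] by (auto simp: subalgebra_def)
  qed
  have HM[measurable]: "H k i \<in> borel_measurable M" for k i by (rule measurable_from_subalg[OF sub Hm])
  have AM[measurable]: "A k i \<in> sets M" for k i by (rule A)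
  define pmin where "pmin = Min (range p)"
  have pmin_pos: "0 < pmin" unfolding pmin_def by (subst Min_gr_iff) (auto simp: p_pos)
  have pmin_le: "pmin \<le> p i" for i unfolding pmin_def by (rule Min_le) auto
  have key: "ennreal pmin * (\<integral>\<^sup>+ w. ennreal (H k i w) \<partial>M) \<le> (\<integral>\<^sup>+ w. ennreal (H k i w) * indicator (A k i) w \<partial>M)" for k i
  proof -
    have "ennreal pmin * (\<integral>\<^sup>+ w. ennreal (H k i w) \<partial>M) \<le> ennreal (p i) * (\<integral>\<^sup>+ w. ennreal (H k i w) \<partial>M)"
      by (rule mult_right_mono) (use pmin_le in \<open>auto intro: ennreal_leI\<close>)
    also have "\<dots> \<le> (\<integral>\<^sup>+ w. ennreal (H k i w) * indicator (A k i) w \<partial>M)"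
      by (rule cond_ind_bound[OF P sub Hm A]) (use samp p_pos in \<open>auto simp: A_def\<close>)
    finally show ?thesis .
  qed
  define S where "S w = (\<Sum>k. ennreal (\<Sum>i\<in>UNIV. H k i w))" for w
  have SM[measurable]: "S \<in> borel_measurable M" unfolding S_def by measurable
  have "ennreal pmin * integral\<^sup>N M S = ennreal pmin * (\<Sum>k. \<Sum>i\<in>UNIV. \<integral>\<^sup>+ w. ennreal (H k i w) \<partial>M)"
  proof -
    have "integral\<^sup>N M S = (\<Sum>k. \<integral>\<^sup>+ w. ennreal (\<Sum>i\<in>UNIV. H k i w) \<partial>M)"
      unfolding S_def by (rule nn_integral_suminf) measurable
    also have "\<dots> = (\<Sum>k. \<Sum>i\<in>UNIV. \<integral>\<^sup>+ w. ennreal (H k i w) \<partial>M)"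
    proof (rule suminf_cong)
      fix k
      have "(\<integral>\<^sup>+ w. ennreal (\<Sum>i\<in>UNIV. H k i w) \<partial>M) = (\<integral>\<^sup>+ w. (\<Sum>i\<in>UNIV. ennreal (H k i w)) \<partial>M)"
        using Hnn by (simp add: sum_nonneg)
      also have "\<dots> = (\<Sum>i\<in>UNIV. \<integral>\<^sup>+ w. ennreal (H k i w) \<partial>M)" by (rule nn_integral_sum) measurable
      finally show "(\<integral>\<^sup>+ w. ennreal (\<Sum>i\<in>UNIV. H k i w) \<partial>M) = (\<Sum>i\<in>UNIV. \<integral>\<^sup>+ w. ennreal (H k i w) \<partial>M)" .
    qed
    finally show ?thesis by simp
  qed
  also have "\<dots> = (\<Sum>k. \<Sum>i\<in>UNIV. ennreal pmin * \<integral>\<^sup>+ w. ennreal (H k i w) \<partial>M)"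
    by (simp only: sum_distrib_left ennreal_suminf_cmult[symmetric])
  also have "\<dots> \<le> (\<Sum>k. \<Sum>i\<in>UNIV. \<integral>\<^sup>+ w. ennreal (H k i w) * indicator (A k i) w \<partial>M)"
    by (intro suminf_le sum_mono key) auto
  also have "\<dots> = (\<integral>\<^sup>+ w. (\<Sum>k. \<Sum>i\<in>UNIV. ennreal (H k i w) * indicator (A k i) w) \<partial>M)"
  proof -
    have "(\<Sum>i\<in>UNIV. \<integral>\<^sup>+ w. ennreal (H k i w) * indicator (A k i) w \<partial>M)
        = (\<integral>\<^sup>+ w. (\<Sum>i\<in>UNIV. ennreal (H k i w) * indicator (A k i) w) \<partial>M)" for k
      by (rule nn_integral_sum[symmetric]) measurable
    hence "(\<Sum>k. \<Sum>i\<in>UNIV. \<integral>\<^sup>+ w. ennreal (H k i w) * indicator (A k i) w \<partial>M)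
        = (\<Sum>k. \<integral>\<^sup>+ w. (\<Sum>i\<in>UNIV. ennreal (H k i w) * indicator (A k i) w) \<partial>M)" by simp
    also have "\<dots> = (\<integral>\<^sup>+ w. (\<Sum>k. \<Sum>i\<in>UNIV. ennreal (H k i w) * indicator (A k i) w) \<partial>M)"
      by (rule nn_integral_suminf[symmetric]) measurable
    finally show ?thesis .
  qed
  also have "\<dots> \<le> (\<integral>\<^sup>+ w. ennreal B \<partial>M)"
  proof (rule nn_integral_mono)
    fix w assume w: "w \<in> space M"
    have eq: "(\<Sum>i\<in>UNIV. ennreal (H k i w) * indicator (A k i) w) = ennreal (\<Sum>i\<in>UNIV. if i \<in> I (Suc k) w then H k i w else 0)" for k
    proof -
      have "(\<Sum>i\<in>UNIV. ennreal (H k i w) * indicator (A k i) w) = (\<Sum>i\<in>UNIV. ennreal (if i \<in> I (Suc k) w then H k i w else 0))"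
        by (rule sum.cong) (auto simp: A_def w indicator_def)
      also have "\<dots> = ennreal (\<Sum>i\<in>UNIV. if i \<in> I (Suc k) w then H k i w else 0)"
        by (rule sum_ennreal) (simp add: Hnn)
      finally show ?thesis .
    qed
    show "(\<Sum>k. \<Sum>i\<in>UNIV. ennreal (H k i w) * indicator (A k i) w) \<le> ennreal B"
      unfolding eq suminf_eq_SUP
    proof (rule SUP_least)
      fix n
      have "(\<Sum>k<n. ennreal (\<Sum>i\<in>UNIV. if i \<in> I (Suc k) w then H k i w else 0))
          = ennreal (\<Sum>k<n. \<Sum>i\<in>UNIV. if i \<in> I (Suc k) w then H k i w else 0)"
        by (rule sum_ennreal) (simp add: Hnn sum_nonneg)
      also have "\<dots> \<le> ennreal B" by (rule ennreal_leI[OF bnd[OF w]])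
      finally show "(\<Sum>k<n. ennreal (\<Sum>i\<in>UNIV. if i \<in> I (Suc k) w then H k i w else 0)) \<le> ennreal B" .
    qed
  qed
  also have "\<dots> < \<infinity>" by (simp add: emeasure_space_1)
  finally have "integral\<^sup>N M S \<noteq> \<infinity>" using pmin_pos by (auto simp: ennreal_mult_less_top)
  hence "AE w in M. S w \<noteq> \<infinity>" by (rule nn_integral_PInf_AE[OF SM])
  thus ?thesis
  proof (rule eventually_mono)
    fix w assume "S w \<noteq> \<infinity>"
    thus "summable (\<lambda>k. \<Sum>i\<in>UNIV. H k i w)"
      by (intro summable_suminf_not_top) (auto simp: S_def Hnn sum_nonneg)
  qed
qed



lemma blk_proj_nth: "blk_proj blk i x $ j = (if blk j = i then x $ j else 0)"
  by (simp add: blk_proj_def)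

lemma blk_proj_add: "blk_proj blk i (u + v) = blk_proj blk i u + blk_proj blk i v"
  by (simp add: vec_eq_iff blk_proj_nth)
lemma blk_proj_diff: "blk_proj blk i (u - v) = blk_proj blk i u - blk_proj blk i v"
  by (simp add: vec_eq_iff blk_proj_nth)
lemma blk_proj_scale: "blk_proj blk i (t *\<^sub>R u) = t *\<^sub>R blk_proj blk i u"
  by (simp add: vec_eq_iff blk_proj_nth)
lemma blk_proj_idem: "blk_proj blk i (blk_proj blk i u) = blk_proj blk i u"
  by (simp add: vec_eq_iff blk_proj_nth)

lemma norm2_vec: "(norm (v::real^'n))\<^sup>2 = (\<Sum>j\<in>UNIV. (v $ j)\<^sup>2)"
  unfolding power2_norm_eq_inner inner_vec_def by (simp add: power2_eq_square)

lemma norm_blk_proj_le: "norm (blk_proj blk i (u::real^'n)) \<le> norm u"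
proof -
  have "(norm (blk_proj blk i u))\<^sup>2 \<le> (norm u)\<^sup>2"
    unfolding norm2_vec by (rule sum_mono) (simp add: blk_proj_nth)
  thus ?thesis by (rule power2_le_imp_le) simp
qed

lemma inner_vec_sum: "inner (a::real^'n) b = (\<Sum>j\<in>UNIV. a $ j * b $ j)"
  by (simp add: inner_vec_def)

locale bsetup =
  fixes blk :: "'n::finite \<Rightarrow> 'b::finite"
    and f :: "'b \<Rightarrow> real^'n \<Rightarrow> real"
    and g :: "'b \<Rightarrow> real^'n \<Rightarrow> real^'n"
    and L gam :: "'b \<Rightarrow> real"
    and G :: "real^'n \<Rightarrow> ereal"
  assumes f_block: "\<And>i u v. blk_proj blk i u = blk_proj blk i v \<Longrightarrow> f i u = f i v"
    and f_grad: "\<And>i u. GDERIV (f i) u :> g i u"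
    and L_nonneg: "\<And>i. 0 \<le> L i"
    and f_Lip: "\<And>i u v. norm (g i u - g i v) \<le> L i * norm (blk_proj blk i u - blk_proj blk i v)"
    and G_proper: "(\<forall>y. G y \<noteq> -\<infinity>) \<and> (\<exists>y. G y \<noteq> \<infinity>)"
    and G_lsc: "lsc G"
    and gam_pos: "\<And>i. 0 < gam i"
    and gam_bound: "\<And>i. gam i * L i < real CARD('b)"
begin

lemma path_deriv: "DERIV (\<lambda>t. f i (a + t *\<^sub>R e)) t :> inner (g i (a + t *\<^sub>R e)) e"
proof -
  have d1: "((\<lambda>t. a + t *\<^sub>R e) has_derivative (\<lambda>h. h *\<^sub>R e)) (at t)"
    by (auto intro!: derivative_eq_intros)
  have d2: "(f i has_derivative (\<lambda>h. inner h (g i (a + t *\<^sub>R e)))) (at (a + t *\<^sub>R e))"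
    using f_grad[of i "a + t *\<^sub>R e"] by (simp add: gderiv_def)
  have "((\<lambda>t. f i (a + t *\<^sub>R e)) has_derivative (\<lambda>h. inner (h *\<^sub>R e) (g i (a + t *\<^sub>R e)))) (at t)"
    using has_derivative_compose[OF d1 d2] by (simp add: o_def)
  thus ?thesis by (simp add: has_field_derivative_def inner_commute mult.commute[of _ "inner e _"])
qed

lemma g_support: assumes "blk j \<noteq> i" shows "g i u $ j = 0"
proof -
  let ?e = "axis j (1::real)"
  have bp: "blk_proj blk i (u + t *\<^sub>R ?e) = blk_proj blk i u" for t
  proof -
    have "(if blk k = i then (u + t *\<^sub>R ?e) $ k else 0) = (if blk k = i then u $ k else 0)" for k
      using assms by (cases "k = j") (auto simp: axis_def)
    thus ?thesis by (simp add: vec_eq_iff blk_proj_nth)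
  qed
  have "\<And>t. f i (u + t *\<^sub>R ?e) = f i u"
    by (rule f_block) (rule bp)
  hence d1: "DERIV (\<lambda>t. f i u) 0 :> inner (g i u) ?e"
    using path_deriv[of i u ?e 0] by simp
  have d2: "DERIV (\<lambda>t. f i u) 0 :> 0" by (rule DERIV_const)
  have "inner (g i u) ?e = 0" by (rule DERIV_unique[OF d1 d2])
  thus ?thesis by (simp add: inner_axis)
qed

lemma g_lip: "norm (g i u - g i v) \<le> L i * norm (u - v)"
proof -
  have "norm (blk_proj blk i u - blk_proj blk i v) \<le> norm (u - v)"
    using norm_blk_proj_le[of blk i "u - v"] by (simp add: blk_proj_diff)
  thus ?thesis using f_Lip[of i u v] L_nonneg[of i] by (meson mult_left_mono order.trans)
qed

lemma blk_descent:
  assumes e: "blk_proj blk i e = e"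
  shows "\<bar>f i (a + e) - f i a - inner (g i a) e\<bar> \<le> L i / 2 * (norm e)\<^sup>2"
proof -
  have key: "\<bar>inner (g i (a + t *\<^sub>R e)) e - inner (g i a) e\<bar> \<le> L i * t * (norm e)\<^sup>2"
    if "0 \<le> t" for t
  proof -
    have "\<bar>inner (g i (a + t *\<^sub>R e)) e - inner (g i a) e\<bar> = \<bar>inner (g i (a + t *\<^sub>R e) - g i a) e\<bar>"
      by (simp add: inner_diff_left)
    also have "\<dots> \<le> norm (g i (a + t *\<^sub>R e) - g i a) * norm e" by (rule Cauchy_Schwarz_ineq2)
    also have "\<dots> \<le> L i * norm (blk_proj blk i (a + t *\<^sub>R e) - blk_proj blk i a) * norm e"
      by (rule mult_right_mono[OF f_Lip]) simp
    also have "blk_proj blk i (a + t *\<^sub>R e) - blk_proj blk i a = t *\<^sub>R e"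
      by (simp add: blk_proj_add blk_proj_scale e)
    finally show ?thesis using that by (simp add: power2_eq_square mult.assoc)
  qed
  define c where "c = inner (g i a) e"
  define q where "q = L i / 2 * (norm e)\<^sup>2"
  have up: "f i (a + 1 *\<^sub>R e) - 1 * c - q * 1\<^sup>2 \<le> f i (a + 0 *\<^sub>R e) - 0 * c - q * 0\<^sup>2"
  proof (rule DERIV_nonpos_imp_nonincreasing[where f = "\<lambda>t. f i (a + t *\<^sub>R e) - t * c - q * t\<^sup>2"])
    fix t :: real assume t: "0 \<le> t" "t \<le> 1"
    show "\<exists>y. DERIV (\<lambda>t. f i (a + t *\<^sub>R e) - t * c - q * t\<^sup>2) t :> y \<and> y \<le> 0"
      apply (rule exI[of _ "inner (g i (a + t *\<^sub>R e)) e - c - q * (2 * t)"])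
      apply (rule conjI)
       apply (rule derivative_eq_intros path_deriv refl | simp)+
      using key[OF t(1)] unfolding c_def q_def by (simp add: abs_le_iff algebra_simps)
  qed simp
  have lo: "f i (a + 0 *\<^sub>R e) - 0 * c + q * 0\<^sup>2 \<le> f i (a + 1 *\<^sub>R e) - 1 * c + q * 1\<^sup>2"
  proof (rule DERIV_nonneg_imp_nondecreasing[where f = "\<lambda>t. f i (a + t *\<^sub>R e) - t * c + q * t\<^sup>2"])
    fix t :: real assume t: "0 \<le> t" "t \<le> 1"
    show "\<exists>y. DERIV (\<lambda>t. f i (a + t *\<^sub>R e) - t * c + q * t\<^sup>2) t :> y \<and> 0 \<le> y"
      apply (rule exI[of _ "inner (g i (a + t *\<^sub>R e)) e - c + q * (2 * t)"])
      apply (rule conjI)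
       apply (rule derivative_eq_intros path_deriv refl | simp)+
      using key[OF t(1)] unfolding c_def q_def by (simp add: abs_le_iff algebra_simps)
  qed simp
  show ?thesis using up lo unfolding c_def[symmetric] q_def[symmetric] by (simp add: abs_le_iff)
qed


lemma swap_blk: "(\<Sum>i\<in>UNIV. \<Sum>j\<in>UNIV. if blk j = i then (h::'b \<Rightarrow> 'n \<Rightarrow> real) i j else 0) = (\<Sum>j\<in>UNIV. (h (blk j) j :: real))"
  by (subst sum.swap) (simp add: sum.delta')


lemma grad_nth: "gradFsep g x $ j = g (blk j) x $ j / real CARD('b)"
proof -
  have "(\<Sum>i\<in>UNIV. g i x $ j) = (\<Sum>i\<in>UNIV. if blk j = i then g (blk j) x $ j else 0)"
    by (rule sum.cong) (auto simp: g_support)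
  thus ?thesis by (simp add: gradFsep_def sum_component)
qed

lemma inner_grad: "inner (gradFsep g x) d = (\<Sum>j\<in>UNIV. g (blk j) x $ j * d $ j) / real CARD('b)"
  by (simp add: inner_vec_sum grad_nth sum_divide_distrib)

lemma F_desc:
  "\<bar>Fsep f (x + d) - Fsep f x - inner (gradFsep g x) d\<bar> \<le> (\<Sum>j\<in>UNIV. L (blk j) / (2 * real CARD('b)) * (d $ j)\<^sup>2)"
proof -
  have fe: "f i (x + d) = f i (x + blk_proj blk i d)" for i
    by (rule f_block) (simp add: blk_proj_add blk_proj_idem)
  have ie: "(\<Sum>i\<in>UNIV. inner (g i x) (blk_proj blk i d)) = (\<Sum>j\<in>UNIV. g (blk j) x $ j * d $ j)"
  proof -
    have "(\<Sum>i\<in>UNIV. inner (g i x) (blk_proj blk i d)) = (\<Sum>i\<in>UNIV. \<Sum>j\<in>UNIV. if blk j = i then g i x $ j * d $ j else 0)"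
      by (simp add: inner_vec_sum blk_proj_nth if_distrib cong: if_cong)
    thus ?thesis by (simp add: swap_blk)
  qed
  have ne: "(\<Sum>i\<in>UNIV. L i / 2 * (norm (blk_proj blk i d))\<^sup>2) = (\<Sum>j\<in>UNIV. L (blk j) / 2 * (d $ j)\<^sup>2)"
  proof -
    have "(\<Sum>i\<in>UNIV. L i / 2 * (norm (blk_proj blk i d))\<^sup>2) = (\<Sum>i\<in>UNIV. \<Sum>j\<in>UNIV. if blk j = i then L i / 2 * (d $ j)\<^sup>2 else 0)"
      by (auto simp: norm2_vec blk_proj_nth sum_distrib_left intro!: sum.cong)
    thus ?thesis by (simp add: swap_blk)
  qed
  have "Fsep f (x + d) - Fsep f x - inner (gradFsep g x) d
      = (\<Sum>i\<in>UNIV. f i (x + blk_proj blk i d) - f i x - inner (g i x) (blk_proj blk i d)) / real CARD('b)"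
    by (simp add: Fsep_def inner_grad fe sum_subtractf ie diff_divide_distrib)
  hence "\<bar>Fsep f (x + d) - Fsep f x - inner (gradFsep g x) d\<bar>
      \<le> (\<Sum>i\<in>UNIV. \<bar>f i (x + blk_proj blk i d) - f i x - inner (g i x) (blk_proj blk i d)\<bar>) / real CARD('b)"
    by (simp add: divide_right_mono sum_abs)
  also have "\<dots> \<le> (\<Sum>i\<in>UNIV. L i / 2 * (norm (blk_proj blk i d))\<^sup>2) / real CARD('b)"
    by (intro divide_right_mono sum_mono blk_descent) (auto simp: blk_proj_idem)
  also have "\<dots> = (\<Sum>j\<in>UNIV. L (blk j) / 2 * (d $ j)\<^sup>2) / real CARD('b)"
    by (simp only: ne)
  also have "\<dots> = (\<Sum>j\<in>UNIV. L (blk j) / (2 * real CARD('b)) * (d $ j)\<^sup>2)"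
    by (simp add: sum_divide_distrib)
  finally show ?thesis .
qed


definition "Q x w = Fsep f x + inner (gradFsep g x) (w - x) + Gam_inv_norm2 blk gam (w - x) / 2"
definition "uu x = x - Gam_mul blk gam (gradFsep g x)"
definition "CC x = Fsep f x - (\<Sum>j\<in>UNIV. gam (blk j) * (gradFsep g x $ j)\<^sup>2) / 2"

lemma Nid: "Gam_inv_norm2 blk gam (w - uu x) = Gam_inv_norm2 blk gam (w - x) + 2 * inner (gradFsep g x) (w - x)
   + (\<Sum>j\<in>UNIV. gam (blk j) * (gradFsep g x $ j)\<^sup>2)"
proof -
  have "((w - uu x) $ j)\<^sup>2 / gam (blk j) = ((w - x) $ j)\<^sup>2 / gam (blk j) + 2 * (gradFsep g x $ j * (w - x) $ j)
     + gam (blk j) * (gradFsep g x $ j)\<^sup>2" for j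
    using gam_pos[of "blk j"] by (simp add: uu_def Gam_mul_def field_simps power2_eq_square)
  thus ?thesis unfolding Gam_inv_norm2_def inner_vec_sum
    by (simp add: sum.distrib sum_distrib_left)
qed

lemma Q_eq: "Q x w = CC x + Gam_inv_norm2 blk gam (w - uu x) / 2"
  by (simp add: Q_def CC_def Nid field_simps)

lemma T_prox: "z \<in> Tmap g G blk gam x \<Longrightarrow>
    G z + ereal (Gam_inv_norm2 blk gam (z - uu x) / 2) \<le> G v + ereal (Gam_inv_norm2 blk gam (v - uu x) / 2)"
  by (simp add: Tmap_def prox_set_def uu_def)

lemma FBE_Q: "FBE f g G blk gam x = (INF w. ereal (Q x w) + G w)"
  by (simp add: FBE_def Q_def)

lemma FBE_at: assumes z: "z \<in> Tmap g G blk gam x"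
  shows "FBE f g G blk gam x = ereal (Q x z) + G z"
proof (rule antisym)
  show "FBE f g G blk gam x \<le> ereal (Q x z) + G z" unfolding FBE_Q by (rule INF_lower) simp
  show "ereal (Q x z) + G z \<le> FBE f g G blk gam x" unfolding FBE_Q
  proof (rule INF_greatest)
    fix w :: "real^'n"
    have "ereal (Q x z) + G z = ereal (CC x) + (G z + ereal (Gam_inv_norm2 blk gam (z - uu x) / 2))"
      by (simp add: Q_eq add_ac)
    also have "\<dots> \<le> ereal (CC x) + (G w + ereal (Gam_inv_norm2 blk gam (w - uu x) / 2))"
      by (rule add_left_mono) (rule T_prox[OF z])
    also have "\<dots> = ereal (Q x w) + G w" by (simp add: Q_eq add_ac)
    finally show "ereal (Q x z) + G z \<le> ereal (Q x w) + G w" .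
  qed
qed

lemma G_fin: assumes z: "z \<in> Tmap g G blk gam x" shows "G z \<noteq> \<infinity>" "G z \<noteq> -\<infinity>"
proof -
  obtain y where y: "G y \<noteq> \<infinity>" using G_proper by auto
  have "G z + ereal (Gam_inv_norm2 blk gam (z - uu x) / 2) \<le> G y + ereal (Gam_inv_norm2 blk gam (y - uu x) / 2)"
    by (rule T_prox[OF z])
  also have "\<dots> < \<infinity>" using y by simp
  finally show "G z \<noteq> \<infinity>" by auto
  show "G z \<noteq> -\<infinity>" using G_proper by auto
qed

definition "KK = (\<Sum>i\<in>UNIV. L i / (2 * real CARD('b)) + 1 / (2 * gam i))"

lemma coef_pos: "L i / (2 * real CARD('b)) < 1 / (2 * gam i)"
  using gam_bound[of i] gam_pos[of i] by (simp add: field_simps)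

lemma coef_le_KK: "L i / (2 * real CARD('b)) + 1 / (2 * gam i) \<le> KK"
  unfolding KK_def
proof (rule member_le_sum[where f = "\<lambda>i. L i / (2 * real CARD('b)) + 1 / (2 * gam i)"])
  fix x show "0 \<le> L x / (2 * real CARD('b)) + 1 / (2 * gam x)"
    using L_nonneg[of x] gam_pos[of x] by (intro add_nonneg_nonneg) auto
qed simp_all

lemma KK_pos: "0 < KK"
  using coef_le_KK[of undefined] L_nonneg[of undefined] gam_pos[of undefined]
  by (smt (verit) divide_nonneg_nonneg divide_pos_pos of_nat_0_le_iff)

lemma Q_bounds: "Fsep f z \<le> Q x z" "Q x z \<le> Fsep f z + KK * (norm (z - x))\<^sup>2"
proof -
  define d where "d = z - x"
  have zd: "z = x + d" by (simp add: d_def)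
  have A: "\<bar>Fsep f z - Fsep f x - inner (gradFsep g x) d\<bar> \<le> (\<Sum>j\<in>UNIV. L (blk j) / (2 * real CARD('b)) * (d $ j)\<^sup>2)"
    using F_desc[of x d] by (simp add: zd)
  have Qd: "Q x z = Fsep f x + inner (gradFsep g x) d + (\<Sum>j\<in>UNIV. 1 / (2 * gam (blk j)) * (d $ j)\<^sup>2)"
    by (simp add: Q_def d_def Gam_inv_norm2_def sum_divide_distrib mult.commute)
  have "(\<Sum>j\<in>UNIV. L (blk j) / (2 * real CARD('b)) * (d $ j)\<^sup>2) \<le> (\<Sum>j\<in>UNIV. 1 / (2 * gam (blk j)) * (d $ j)\<^sup>2)"
    by (intro sum_mono mult_right_mono less_imp_le[OF coef_pos]) simp
  thus "Fsep f z \<le> Q x z" using A Qd by (simp add: abs_le_iff)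
  have "(\<Sum>j\<in>UNIV. L (blk j) / (2 * real CARD('b)) * (d $ j)\<^sup>2) + (\<Sum>j\<in>UNIV. 1 / (2 * gam (blk j)) * (d $ j)\<^sup>2)
      = (\<Sum>j\<in>UNIV. (L (blk j) / (2 * real CARD('b)) + 1 / (2 * gam (blk j))) * (d $ j)\<^sup>2)"
    by (simp add: sum.distrib[symmetric] distrib_right)
  also have "\<dots> \<le> (\<Sum>j\<in>UNIV. KK * (d $ j)\<^sup>2)"
    by (intro sum_mono mult_right_mono coef_le_KK) simp
  also have "\<dots> = KK * (norm d)\<^sup>2" by (simp add: norm2_vec sum_distrib_left)
  finally show "Q x z \<le> Fsep f z + KK * (norm (z - x))\<^sup>2" using A Qd by (simp add: abs_le_iff d_def)
qed


end



context bsetup begin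

definition "cc = Min (range (\<lambda>i. 1 / (2 * gam i) - L i / (2 * real CARD('b))))"

lemma cc_pos: "0 < cc"
  unfolding cc_def by (subst Min_gr_iff) (auto simp: coef_pos)

lemma cc_le: "cc \<le> 1 / (2 * gam i) - L i / (2 * real CARD('b))"
  unfolding cc_def by (rule Min_le) auto

lemma step:
  assumes z: "z \<in> Tmap g G blk gam x"
    and x': "\<And>j. x' $ j = (if blk j \<in> I then z $ j else x $ j)"
  shows "Q x' z \<le> Q x z - cc * (\<Sum>j\<in>UNIV. if blk j \<in> I then (z $ j - x $ j)\<^sup>2 else 0)"
proof -
  define d :: "real^'n" where "d = (\<chi> j. if blk j \<in> I then z $ j - x $ j else 0)"
  have xd: "x' = x + d" by (simp add: vec_eq_iff d_def x')
  have F1: "Fsep f x' \<le> Fsep f x + (\<Sum>j\<in>UNIV. gradFsep g x $ j * d $ j + L (blk j) / (2 * real CARD('b)) * (d $ j)\<^sup>2)"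
    using F_desc[of x d] by (simp add: xd abs_le_iff inner_vec_sum sum.distrib)
  have gsame: "gradFsep g x' $ j = gradFsep g x $ j" if "blk j \<notin> I" for j
  proof -
    have "blk_proj blk (blk j) x' = blk_proj blk (blk j) x"
      using that by (auto simp: vec_eq_iff blk_proj_nth x')
    hence "norm (g (blk j) x' - g (blk j) x) \<le> 0" using f_Lip[of "blk j" x' x] by simp
    thus ?thesis by (simp add: grad_nth)
  qed
  have Q1a: "inner (gradFsep g x') (z - x') = (\<Sum>j\<in>UNIV. if blk j \<in> I then 0 else gradFsep g x $ j * (z $ j - x $ j))"
    unfolding inner_vec_sum by (rule sum.cong) (auto simp: x' gsame)
  have Q1b: "Gam_inv_norm2 blk gam (z - x') / 2 = (\<Sum>j\<in>UNIV. if blk j \<in> I then 0 else (z $ j - x $ j)\<^sup>2 / gam (blk j) / 2)"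
    unfolding Gam_inv_norm2_def sum_divide_distrib by (rule sum.cong) (auto simp: x')
  have Q1: "Q x' z = Fsep f x' + (\<Sum>j\<in>UNIV. if blk j \<in> I then 0 else gradFsep g x $ j * (z $ j - x $ j))
      + (\<Sum>j\<in>UNIV. if blk j \<in> I then 0 else (z $ j - x $ j)\<^sup>2 / gam (blk j) / 2)"
    unfolding Q_def Q1a Q1b[symmetric] by simp
  have Q0: "Q x z - cc * (\<Sum>j\<in>UNIV. if blk j \<in> I then (z $ j - x $ j)\<^sup>2 else 0)
     = Fsep f x + (\<Sum>j\<in>UNIV. gradFsep g x $ j * (z $ j - x $ j) + (z $ j - x $ j)\<^sup>2 / gam (blk j) / 2
          - cc * (if blk j \<in> I then (z $ j - x $ j)\<^sup>2 else 0))"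
    by (simp add: Q_def inner_vec_sum Gam_inv_norm2_def sum_divide_distrib sum_distrib_left sum.distrib sum_subtractf)
  have "(\<Sum>j\<in>UNIV. gradFsep g x $ j * d $ j + L (blk j) / (2 * real CARD('b)) * (d $ j)\<^sup>2)
       + (\<Sum>j\<in>UNIV. if blk j \<in> I then 0 else gradFsep g x $ j * (z $ j - x $ j))
       + (\<Sum>j\<in>UNIV. if blk j \<in> I then 0 else (z $ j - x $ j)\<^sup>2 / gam (blk j) / 2)
     \<le> (\<Sum>j\<in>UNIV. gradFsep g x $ j * (z $ j - x $ j) + (z $ j - x $ j)\<^sup>2 / gam (blk j) / 2
          - cc * (if blk j \<in> I then (z $ j - x $ j)\<^sup>2 else 0))"
    unfolding sum.distrib[symmetric]
  proof (rule sum_mono)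
    fix j
    have c: "cc * (z $ j - x $ j)\<^sup>2 \<le> (1 / (2 * gam (blk j)) - L (blk j) / (2 * real CARD('b))) * (z $ j - x $ j)\<^sup>2"
      by (rule mult_right_mono[OF cc_le]) simp
    show "gradFsep g x $ j * d $ j + L (blk j) / (2 * real CARD('b)) * (d $ j)\<^sup>2 +
        (if blk j \<in> I then 0 else gradFsep g x $ j * (z $ j - x $ j)) +
        (if blk j \<in> I then 0 else (z $ j - x $ j)\<^sup>2 / gam (blk j) / 2)
        \<le> gradFsep g x $ j * (z $ j - x $ j) + (z $ j - x $ j)\<^sup>2 / gam (blk j) / 2 -
          cc * (if blk j \<in> I then (z $ j - x $ j)\<^sup>2 else 0)"
      using c by (auto simp: d_def algebra_simps)
  qed
  thus ?thesis using F1 Q1 Q0 by linarith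
qed


definition "Phi y = ereal (Fsep f y) + G y"

lemma FBE_fin: assumes z: "z \<in> Tmap g G blk gam x"
  shows "FBE f g G blk gam x = ereal (Q x z + real_of_ereal (G z))"
  using FBE_at[OF z] G_fin[OF z] by (cases "G z") auto

lemma Phi_le_FBE: assumes z: "z \<in> Tmap g G blk gam x"
  shows "Phi z \<le> FBE f g G blk gam x"
  using FBE_fin[OF z] G_fin[OF z] Q_bounds(1)[of z x] by (cases "G z") (auto simp: Phi_def)

lemma FBE_le_Q: "FBE f g G blk gam x \<le> ereal (Q x w) + G w"
  unfolding FBE_Q by (rule INF_lower) simp


end

locale bseq = bsetup blk f g L gam G
  for blk :: "'n::finite \<Rightarrow> 'b::finite"
    and f :: "'b \<Rightarrow> real^'n \<Rightarrow> real"
    and g :: "'b \<Rightarrow> real^'n \<Rightarrow> real^'n"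
    and L gam :: "'b \<Rightarrow> real"
    and G :: "real^'n \<Rightarrow> ereal" +
  fixes x z :: "nat \<Rightarrow> real^'n" and I :: "nat \<Rightarrow> 'b set" and y0 :: "real^'n"
  assumes zT: "\<And>k. z k \<in> Tmap g G blk gam (x k)"
    and upd: "\<And>k j. x (Suc k) $ j = (if blk j \<in> I (Suc k) then z k $ j else x k $ j)"
    and y0: "\<And>u. Phi y0 \<le> Phi u"
begin

definition "gz k = real_of_ereal (G (z k))"
definition "V k = Q (x k) (z k) + gz k"
definition "E k = (\<Sum>j\<in>UNIV. if blk j \<in> I (Suc k) then (z k $ j - x k $ j)\<^sup>2 else 0)"
definition "m = Fsep f y0 + real_of_ereal (G y0)"

lemma Gz: "G (z k) = ereal (gz k)"
  using G_fin[OF zT[of k]] by (cases "G (z k)") (auto simp: gz_def)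

lemma FBE_V: "FBE f g G blk gam (x k) = ereal (V k)"
  using FBE_fin[OF zT[of k]] by (simp add: V_def gz_def)

lemma Phi_z: "Phi (z k) = ereal (Fsep f (z k) + gz k)"
  by (simp add: Phi_def Gz)

lemma Phi_y0: "Phi y0 = ereal m"
proof -
  obtain y where y: "G y \<noteq> \<infinity>" using G_proper by auto
  have "Phi y0 \<le> Phi y" by (rule y0)
  also have "\<dots> < \<infinity>" using y G_proper by (cases "G y") (auto simp: Phi_def)
  finally have "G y0 \<noteq> \<infinity>" by (auto simp: Phi_def)
  moreover have "G y0 \<noteq> -\<infinity>" using G_proper by auto
  ultimately show ?thesis by (cases "G y0") (auto simp: Phi_def m_def)
qed

lemma INF_Phi: "(INF y. Phi y) = ereal m"
proof (rule antisym)
  show "(INF y. Phi y) \<le> ereal m" using Phi_y0 by (metis INF_lower UNIV_I)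
  show "ereal m \<le> (INF y. Phi y)" using y0 Phi_y0 by (metis INF_greatest)
qed

lemma V_dec: "V (Suc k) \<le> V k - cc * E k"
proof -
  have "ereal (V (Suc k)) \<le> ereal (Q (x (Suc k)) (z k)) + G (z k)"
    using FBE_le_Q[of "x (Suc k)" "z k"] by (simp add: FBE_V)
  hence "V (Suc k) \<le> Q (x (Suc k)) (z k) + gz k" by (simp add: Gz)
  also have "\<dots> \<le> Q (x k) (z k) - cc * E k + gz k"
    using step[OF zT[of k] upd[of k]] by (simp add: E_def)
  finally show ?thesis by (simp add: V_def)
qed

lemma V_lb: "m \<le> V k"
proof -
  have "ereal m \<le> Phi (z k)" using y0 Phi_y0 by metis
  also have "\<dots> \<le> ereal (V k)" using Phi_le_FBE[OF zT[of k]] FBE_V by simp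
  finally show ?thesis by simp
qed

lemma V_sand: "V k - KK * (norm (z k - x k))\<^sup>2 \<le> Fsep f (z k) + gz k" "Fsep f (z k) + gz k \<le> V k"
  using Q_bounds[where z="z k" and x="x k"] by (auto simp: V_def)

lemma E_nonneg: "0 \<le> E k" unfolding E_def by (rule sum_nonneg) auto

lemma E_sum: "cc * (\<Sum>k<n. E k) \<le> V 0 - m"
proof -
  have "cc * (\<Sum>k<n. E k) \<le> V 0 - V n"
  proof (induction n)
    case (Suc n) thus ?case using V_dec[of n] by (simp add: distrib_left)
  qed simp
  thus ?thesis using V_lb[of n] by linarith
qed

end



lemma cluster_sub:
  fixes x z :: "nat \<Rightarrow> 'a::real_normed_vector"
  assumes "(\<lambda>k. norm (x k - z k)) \<longlonglongrightarrow> 0"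
  shows "cluster_points x \<subseteq> cluster_points z"
proof
  fix a assume "a \<in> cluster_points x"
  then obtain r where r: "strict_mono r" "(x \<circ> r) \<longlonglongrightarrow> a" by (auto simp: cluster_points_def)
  have "((\<lambda>k. norm (x k - z k)) \<circ> r) \<longlonglongrightarrow> 0" by (rule LIMSEQ_subseq_LIMSEQ[OF assms r(1)])
  hence "(\<lambda>n. x (r n) - z (r n)) \<longlonglongrightarrow> 0" by (simp add: o_def tendsto_norm_zero_iff)
  hence "(\<lambda>n. x (r n) - (x (r n) - z (r n))) \<longlonglongrightarrow> a - 0"
    using r(2) by (intro tendsto_diff) (simp_all add: o_def)
  hence "(z \<circ> r) \<longlonglongrightarrow> a" by (simp add: o_def)
  thus "a \<in> cluster_points z" using r(1) by (auto simp: cluster_points_def)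
qed

context bsetup begin

lemma g_tendsto: assumes "s \<longlonglongrightarrow> a" shows "(\<lambda>n. g i (s n)) \<longlonglongrightarrow> g i a"
proof -
  have "(\<lambda>n. norm (s n - a)) \<longlonglongrightarrow> 0" by (rule tendsto_norm_zero[OF LIM_zero[OF assms]])
  hence l: "(\<lambda>n. L i * norm (s n - a)) \<longlonglongrightarrow> 0" by (rule tendsto_mult_right_zero)
  have ev: "eventually (\<lambda>n. norm (g i (s n) - g i a) \<le> L i * norm (s n - a)) sequentially"
    by (rule always_eventually) (intro allI g_lip)
  have "(\<lambda>n. g i (s n) - g i a) \<longlonglongrightarrow> 0" by (rule Lim_null_comparison[OF ev l])
  thus ?thesis by (rule LIM_zero_cancel)
qed

lemma grad_tendsto: "s \<longlonglongrightarrow> a \<Longrightarrow> (\<lambda>n. gradFsep g (s n)) \<longlonglongrightarrow> gradFsep g a"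
  unfolding gradFsep_def by (rule tendsto_scaleR[OF tendsto_const tendsto_sum[OF g_tendsto]])

lemma F_tendsto: assumes "s \<longlonglongrightarrow> a" shows "(\<lambda>n. Fsep f (s n)) \<longlonglongrightarrow> Fsep f a"
proof -
  have "isCont (f i) a" for i
    using f_grad[of i a] by (intro has_derivative_continuous) (simp add: gderiv_def)
  hence "(\<lambda>n. f i (s n)) \<longlonglongrightarrow> f i a" for i using assms isCont_tendsto_compose by blast
  thus ?thesis unfolding Fsep_def by (rule tendsto_divide[OF tendsto_sum tendsto_const]) auto
qed

lemma N_tendsto: "s \<longlonglongrightarrow> a \<Longrightarrow> (\<lambda>n. Gam_inv_norm2 blk gam (s n)) \<longlonglongrightarrow> Gam_inv_norm2 blk gam a"
  unfolding Gam_inv_norm2_def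
  by (rule tendsto_sum, rule tendsto_divide[OF tendsto_power[OF tendsto_vec_nth] tendsto_const])
     (auto simp: less_imp_neq[OF gam_pos, symmetric])

lemma uu_tendsto: assumes "s \<longlonglongrightarrow> a" shows "(\<lambda>n. uu (s n)) \<longlonglongrightarrow> uu a"
proof -
  have "(\<lambda>n. Gam_mul blk gam (gradFsep g (s n))) \<longlonglongrightarrow> Gam_mul blk gam (gradFsep g a)"
    unfolding Gam_mul_def
    by (rule vec_tendstoI) (simp, rule tendsto_mult[OF tendsto_const tendsto_vec_nth[OF grad_tendsto[OF assms]]])
  thus ?thesis unfolding uu_def by (rule tendsto_diff[OF assms])
qed

lemma lsc_ev: assumes "s \<longlonglongrightarrow> a" "c < G a" shows "eventually (\<lambda>n. c < G (s n)) sequentially"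
proof -
  have "G a \<le> Liminf (at a) G" using G_lsc unfolding lsc_def by blast
  hence "c < Liminf (at a) G" using assms(2) by (rule order.strict_trans2[rotated])
  hence "eventually (\<lambda>y. c < G y) (at a)" by (rule less_LiminfD)
  hence "eventually (\<lambda>y. y \<noteq> a \<longrightarrow> y \<in> UNIV \<longrightarrow> c < G y) (nhds a)" by (simp only: eventually_at_filter)
  hence ev: "eventually (\<lambda>y. c < G y) (nhds a)"
    by (rule eventually_mono) (use assms(2) in blast)
  have "filterlim s (nhds a) sequentially" using assms(1) by simp
  thus ?thesis using ev by (rule filterlim_iff[THEN iffD1, rule_format])
qed

lemma Q_self: "Q x x = Fsep f x"
  by (simp add: Q_def Gam_inv_norm2_def)

lemma fixed_ineq:
  assumes T: "xs \<in> Tmap g G blk gam xs" and gx: "G xs = ereal a" and gy: "G y = ereal b"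
  shows "Fsep f xs + a \<le> Fsep f y + b + KK * (norm (y - xs))\<^sup>2"
proof -
  define d where "d = y - xs"
  define S where "S = (\<Sum>j\<in>UNIV. gam (blk j) * (gradFsep g xs $ j)\<^sup>2)"
  have "G xs + ereal (Gam_inv_norm2 blk gam (xs - uu xs) / 2) \<le> G y + ereal (Gam_inv_norm2 blk gam (y - uu xs) / 2)"
    by (rule T_prox[OF T])
  hence "a + S / 2 \<le> b + (Gam_inv_norm2 blk gam d + 2 * inner (gradFsep g xs) d + S) / 2"
    unfolding Nid by (simp add: gx gy S_def d_def Gam_inv_norm2_def)
  hence p: "a \<le> b + Gam_inv_norm2 blk gam d / 2 + inner (gradFsep g xs) d" by (simp add: field_simps)
  have A: "\<bar>Fsep f y - Fsep f xs - inner (gradFsep g xs) d\<bar> \<le> (\<Sum>j\<in>UNIV. L (blk j) / (2 * real CARD('b)) * (d $ j)\<^sup>2)"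
    using F_desc[of xs d] by (simp add: d_def)
  have N2: "Gam_inv_norm2 blk gam d / 2 = (\<Sum>j\<in>UNIV. 1 / (2 * gam (blk j)) * (d $ j)\<^sup>2)"
    by (simp add: Gam_inv_norm2_def sum_divide_distrib mult.commute)
  have "(\<Sum>j\<in>UNIV. L (blk j) / (2 * real CARD('b)) * (d $ j)\<^sup>2) + (\<Sum>j\<in>UNIV. 1 / (2 * gam (blk j)) * (d $ j)\<^sup>2)
      = (\<Sum>j\<in>UNIV. (L (blk j) / (2 * real CARD('b)) + 1 / (2 * gam (blk j))) * (d $ j)\<^sup>2)"
    by (simp add: sum.distrib[symmetric] distrib_right)
  also have "\<dots> \<le> (\<Sum>j\<in>UNIV. KK * (d $ j)\<^sup>2)"
    by (intro sum_mono mult_right_mono coef_le_KK) simp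
  also have "\<dots> = KK * (norm d)\<^sup>2" by (simp add: norm2_vec sum_distrib_left)
  finally show ?thesis using A p N2 by (simp add: abs_le_iff d_def)
qed

lemma frechet0:
  assumes T: "xs \<in> Tmap g G blk gam xs" and gx: "G xs = ereal a"
  shows "0 \<in> frechet_subdiff Phi xs"
  unfolding frechet_subdiff_def
proof (intro CollectI conjI allI impI)
  show "\<bar>Phi xs\<bar> \<noteq> \<infinity>" by (simp add: Phi_def gx)
  fix e :: real assume e: "0 < e"
  show "\<exists>d>0. \<forall>y. norm (y - xs) < d \<longrightarrow> Phi xs + ereal (inner 0 (y - xs) - e * norm (y - xs)) \<le> Phi y"
  proof (intro exI[of _ "e / KK"] conjI allI impI)
    show "0 < e / KK" using e KK_pos by simp
    fix y assume y: "norm (y - xs) < e / KK"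
    show "Phi xs + ereal (inner 0 (y - xs) - e * norm (y - xs)) \<le> Phi y"
    proof (cases "G y")
      case (real b)
      have "KK * (norm (y - xs))\<^sup>2 \<le> e * norm (y - xs)"
      proof -
        have "KK * norm (y - xs) \<le> e" using y KK_pos by (simp add: field_simps)
        hence "KK * norm (y - xs) * norm (y - xs) \<le> e * norm (y - xs)" by (rule mult_right_mono) simp
        thus ?thesis by (simp add: power2_eq_square mult.assoc)
      qed
      thus ?thesis using fixed_ineq[OF T gx real] by (simp add: Phi_def gx real)
    next
      case PInf thus ?thesis by (simp add: Phi_def)
    next
      case MInf thus ?thesis using G_proper by auto
    qed
  qed
qed

end



lemma sub_conv:
  fixes x z :: "nat \<Rightarrow> 'a::real_normed_vector"
  assumes "(\<lambda>k. norm (x k - z k)) \<longlonglongrightarrow> 0" "strict_mono r" "(\<lambda>n. x (r n)) \<longlonglongrightarrow> a"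
  shows "(\<lambda>n. z (r n)) \<longlonglongrightarrow> a"
proof -
  have "((\<lambda>k. norm (x k - z k)) \<circ> r) \<longlonglongrightarrow> 0" by (rule LIMSEQ_subseq_LIMSEQ[OF assms(1,2)])
  hence "(\<lambda>n. norm (x (r n) - z (r n))) \<longlonglongrightarrow> 0" by (simp add: o_def)
  hence "(\<lambda>n. x (r n) - z (r n)) \<longlonglongrightarrow> 0" by (rule tendsto_norm_zero_cancel)
  hence "(\<lambda>n. x (r n) - (x (r n) - z (r n))) \<longlonglongrightarrow> a - 0" by (rule tendsto_diff[OF assms(3)])
  thus ?thesis by simp
qed

context bseq begin

lemma limit_part:
  assumes summ: "summable (\<lambda>k. (norm (x k - z k))\<^sup>2)"
  shows "(\<lambda>k. norm (x k - z k)) \<longlonglongrightarrow> 0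
    \<and> (\<exists>Phi_star :: real.
          (\<lambda>k. FBE f g G blk gam (x k)) \<longlonglongrightarrow> ereal Phi_star
        \<and> (INF y. Phi y) \<le> ereal Phi_star
        \<and> (\<lambda>k. Phi (z k)) \<longlonglongrightarrow> ereal Phi_star
        \<and> cluster_points x = cluster_points z
        \<and> (\<forall>xs \<in> cluster_points x.
             0 \<in> frechet_subdiff Phi xs
           \<and> Phi xs = FBE f g G blk gam xs
           \<and> FBE f g G blk gam xs = ereal Phi_star))"
proof -
  have "(\<lambda>k. (norm (x k - z k))\<^sup>2) \<longlonglongrightarrow> 0" by (rule summable_LIMSEQ_zero[OF summ])
  hence "(\<lambda>k. sqrt ((norm (x k - z k))\<^sup>2)) \<longlonglongrightarrow> sqrt 0" by (rule tendsto_real_sqrt)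
  hence nz: "(\<lambda>k. norm (x k - z k)) \<longlonglongrightarrow> 0" by simp
  have nz': "(\<lambda>k. norm (z k - x k)) \<longlonglongrightarrow> 0" using nz by (simp add: norm_minus_commute)
  have dec: "decseq V"
  proof (rule decseq_SucI)
    fix k have "0 \<le> cc * E k" using cc_pos E_nonneg[of k] by simp
    thus "V (Suc k) \<le> V k" using V_dec[of k] by linarith
  qed
  have bdd: "bdd_below (range V)" using V_lb by (intro bdd_belowI) auto
  define Ps where "Ps = (INF k. V k)"
  have VPs: "V \<longlonglongrightarrow> Ps" unfolding Ps_def by (rule LIMSEQ_decseq_INF[OF bdd dec])
  have mPs: "m \<le> Ps" unfolding Ps_def by (rule cINF_greatest) (auto intro: V_lb)
  have FBEt: "(\<lambda>k. FBE f g G blk gam (x k)) \<longlonglongrightarrow> ereal Ps"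
    unfolding FBE_V by (rule tendsto_ereal[OF VPs])
  have INFle: "(INF y. Phi y) \<le> ereal Ps" using mPs by (simp add: INF_Phi)
  have realPhi: "(\<lambda>k. Fsep f (z k) + gz k) \<longlonglongrightarrow> Ps"
  proof (rule real_tendsto_sandwich)
    show "eventually (\<lambda>k. V k - KK * (norm (z k - x k))\<^sup>2 \<le> Fsep f (z k) + gz k) sequentially"
      using V_sand(1) by simp
    show "eventually (\<lambda>k. Fsep f (z k) + gz k \<le> V k) sequentially" using V_sand(2) by simp
    have "(\<lambda>k. V k - KK * (norm (z k - x k))\<^sup>2) \<longlonglongrightarrow> Ps - KK * 0\<^sup>2"
      by (intro tendsto_diff tendsto_mult tendsto_const tendsto_power VPs nz')
    thus "(\<lambda>k. V k - KK * (norm (z k - x k))\<^sup>2) \<longlonglongrightarrow> Ps" by simp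
  qed (rule VPs)
  have Phit: "(\<lambda>k. Phi (z k)) \<longlonglongrightarrow> ereal Ps"
    unfolding Phi_z by (rule tendsto_ereal[OF realPhi])
  have clu: "cluster_points x = cluster_points z"
    using cluster_sub[OF nz] cluster_sub[OF nz'] by blast
  have pts: "0 \<in> frechet_subdiff Phi xs \<and> Phi xs = FBE f g G blk gam xs \<and> FBE f g G blk gam xs = ereal Ps"
    if xs: "xs \<in> cluster_points x" for xs
  proof -
    obtain r where r: "strict_mono r" "(x \<circ> r) \<longlonglongrightarrow> xs" using xs by (auto simp: cluster_points_def)
    have xr: "(\<lambda>n. x (r n)) \<longlonglongrightarrow> xs" using r(2) by (simp add: o_def)
    have zr: "(\<lambda>n. z (r n)) \<longlonglongrightarrow> xs" by (rule sub_conv[OF nz r(1) xr])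
    have ur: "(\<lambda>n. uu (x (r n))) \<longlonglongrightarrow> uu xs" by (rule uu_tendsto[OF xr])
    have prox: "G (z (r n)) + ereal (Gam_inv_norm2 blk gam (z (r n) - uu (x (r n))) / 2)
        \<le> G v + ereal (Gam_inv_norm2 blk gam (v - uu (x (r n))) / 2)" for n v
      by (rule T_prox[OF zT])
    have N1: "(\<lambda>n. Gam_inv_norm2 blk gam (z (r n) - uu (x (r n))) / 2) \<longlonglongrightarrow> Gam_inv_norm2 blk gam (xs - uu xs) / 2"
      by (intro tendsto_divide tendsto_const N_tendsto tendsto_diff zr ur) simp
    have N2: "(\<lambda>n. Gam_inv_norm2 blk gam (v - uu (x (r n))) / 2) \<longlonglongrightarrow> Gam_inv_norm2 blk gam (v - uu xs) / 2" for v
      by (intro tendsto_divide tendsto_const N_tendsto tendsto_diff ur) simp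
    have Gt: "(\<lambda>n. G (z (r n))) \<longlonglongrightarrow> G xs"
    proof (rule order_tendstoI)
      fix c assume "c < G xs" thus "eventually (\<lambda>n. c < G (z (r n))) sequentially" by (rule lsc_ev[OF zr])
    next
      fix c assume c: "G xs < c"
      then obtain ga where ga: "G xs = ereal ga" using G_proper by (cases "G xs") auto
      show "eventually (\<lambda>n. G (z (r n)) < c) sequentially"
      proof (cases c)
        case PInf thus ?thesis by (simp add: Gz)
      next
        case MInf thus ?thesis using c by simp
      next
        case (real c')
        have le: "gz (r n) \<le> ga + (Gam_inv_norm2 blk gam (xs - uu (x (r n))) / 2 - Gam_inv_norm2 blk gam (z (r n) - uu (x (r n))) / 2)" for n
          using prox[of n xs] by (simp add: Gz ga)
        have "(\<lambda>n. ga + (Gam_inv_norm2 blk gam (xs - uu (x (r n))) / 2 - Gam_inv_norm2 blk gam (z (r n) - uu (x (r n))) / 2))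
           \<longlonglongrightarrow> ga + (Gam_inv_norm2 blk gam (xs - uu xs) / 2 - Gam_inv_norm2 blk gam (xs - uu xs) / 2)"
          by (intro tendsto_add tendsto_const tendsto_diff N1 N2)
        hence "eventually (\<lambda>n. ga + (Gam_inv_norm2 blk gam (xs - uu (x (r n))) / 2 - Gam_inv_norm2 blk gam (z (r n) - uu (x (r n))) / 2) < c') sequentially"
          using c ga real by (intro order_tendstoD(2)) auto
        thus ?thesis
        proof (rule eventually_mono)
          fix n assume h: "ga + (Gam_inv_norm2 blk gam (xs - uu (x (r n))) / 2 - Gam_inv_norm2 blk gam (z (r n) - uu (x (r n))) / 2) < c'"
          show "G (z (r n)) < c" using le_less_trans[OF le[of n] h] by (simp add: Gz real)
        qed
      qed
    qed
    have "(\<lambda>n. Phi (z (r n))) \<longlonglongrightarrow> ereal Ps"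
      using LIMSEQ_subseq_LIMSEQ[OF Phit r(1)] by (simp add: o_def)
    moreover have "(\<lambda>n. Phi (z (r n))) \<longlonglongrightarrow> ereal (Fsep f xs) + G xs"
      unfolding Phi_def by (rule tendsto_add_ereal_general[OF _ tendsto_ereal[OF F_tendsto[OF zr]] Gt]) simp
    ultimately have PhiPs: "ereal (Fsep f xs) + G xs = ereal Ps" using LIMSEQ_unique by blast
    then obtain ga where ga: "G xs = ereal ga" by (cases "G xs") auto
    have T: "xs \<in> Tmap g G blk gam xs"
      unfolding Tmap_def prox_set_def uu_def[symmetric]
    proof (intro CollectI allI)
      fix v
      show "G xs + ereal (Gam_inv_norm2 blk gam (xs - uu xs) / 2) \<le> G v + ereal (Gam_inv_norm2 blk gam (v - uu xs) / 2)"
      proof (cases "G v = \<infinity>")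
        case True thus ?thesis by simp
      next
        case False
        then obtain gv where gv: "G v = ereal gv" using G_proper by (cases "G v") auto
        have l1: "(\<lambda>n. G (z (r n)) + ereal (Gam_inv_norm2 blk gam (z (r n) - uu (x (r n))) / 2))
            \<longlonglongrightarrow> G xs + ereal (Gam_inv_norm2 blk gam (xs - uu xs) / 2)"
          by (rule tendsto_add_ereal[OF _ _ Gt tendsto_ereal[OF N1]]) (simp_all add: ga)
        have l2: "(\<lambda>n. G v + ereal (Gam_inv_norm2 blk gam (v - uu (x (r n))) / 2))
            \<longlonglongrightarrow> G v + ereal (Gam_inv_norm2 blk gam (v - uu xs) / 2)"
          by (rule tendsto_add_ereal[OF _ _ tendsto_const tendsto_ereal[OF N2]]) (simp_all add: gv)
        show ?thesis
          by (rule tendsto_le[OF trivial_limit_sequentially l2 l1]) (simp add: prox)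
      qed
    qed
    have FBExs: "FBE f g G blk gam xs = Phi xs"
      using FBE_at[OF T] by (simp add: Q_self Phi_def)
    show ?thesis using frechet0[OF T ga] FBExs PhiPs by (simp add: Phi_def)
  qed
  show ?thesis using nz FBEt INFle Phit clu pts by blast
qed

end


theorem theorem2p6:
  fixes blk :: "'n::finite \<Rightarrow> 'b::finite"
    and f :: "'b \<Rightarrow> real^'n \<Rightarrow> real"
    and g :: "'b \<Rightarrow> real^'n \<Rightarrow> real^'n"
    and L gam p :: "'b \<Rightarrow> real"
    and G :: "real^'n \<Rightarrow> ereal"
    and M :: "'w measure"
    and Fk :: "nat \<Rightarrow> 'w measure"
    and x z :: "nat \<Rightarrow> 'w \<Rightarrow> real^'n"
    and I :: "nat \<Rightarrow> 'w \<Rightarrow> 'b set"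
    and x0 :: "real^'n"
  defines "Phi \<equiv> (\<lambda>y. ereal (Fsep f y) + G y)"
  assumes f_block: "\<And>i u v. blk_proj blk i u = blk_proj blk i v \<Longrightarrow> f i u = f i v"
    and f_grad: "\<And>i u. GDERIV (f i) u :> g i u"
    and L_nonneg: "\<And>i. 0 \<le> L i"
    and f_Lip: "\<And>i u v. norm (g i u - g i v) \<le> L i * norm (blk_proj blk i u - blk_proj blk i v)"
    and G_proper: "(\<forall>y. G y \<noteq> -\<infinity>) \<and> (\<exists>y. G y \<noteq> \<infinity>)"
    and G_lsc: "lsc G"
    and argmin_ne: "\<exists>y. \<forall>u. Phi y \<le> Phi u"
    and gam_pos: "\<And>i. 0 < gam i"
    and gam_bound: "\<And>i. gam i * L i < real CARD('b)"
    and M_prob: "prob_space M"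
    and Fk_sub: "\<And>k. subalgebra M (Fk k)"
    and Fk_mono: "\<And>k. sets (Fk k) \<subseteq> sets (Fk (Suc k))"
    and x_meas: "\<And>k. x k \<in> borel_measurable (Fk k)"
    and z_meas: "\<And>k. z k \<in> borel_measurable (Fk k)"
    and I_meas: "\<And>k. I (Suc k) \<in> measurable (Fk (Suc k)) (count_space UNIV)"
    and x_init: "\<And>w. x 0 w = x0"
    and z_in_T: "\<And>k w. w \<in> space M \<Longrightarrow> z k w \<in> Tmap g G blk gam (x k w)"
    and x_update: "\<And>k w j. w \<in> space M \<Longrightarrow>
        x (Suc k) w $ j = (if blk j \<in> I (Suc k) w then z k w $ j else x k w $ j)"
    and p_pos: "\<And>i. 0 < p i"
    and sampling: "\<And>k i. AE w in M.
        p i \<le> real_cond_exp M (Fk k) (indicator {w \<in> space M. i \<in> I (Suc k) w}) w"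
  shows "AE w in M.
      summable (\<lambda>k. (norm (x k w - z k w))\<^sup>2)
    \<and> (\<lambda>k. norm (x k w - z k w)) \<longlonglongrightarrow> 0
    \<and> (\<exists>Phi_star :: real.
          (\<lambda>k. FBE f g G blk gam (x k w)) \<longlonglongrightarrow> ereal Phi_star
        \<and> (INF y. Phi y) \<le> ereal Phi_star
        \<and> (\<lambda>k. Phi (z k w)) \<longlonglongrightarrow> ereal Phi_star
        \<and> cluster_points (\<lambda>k. x k w) = cluster_points (\<lambda>k. z k w)
        \<and> (\<forall>xs \<in> cluster_points (\<lambda>k. x k w).
             0 \<in> frechet_subdiff Phi xs
           \<and> Phi xs = FBE f g G blk gam xs
           \<and> FBE f g G blk gam xs = ereal Phi_star))"
proof -
  interpret bs: bsetup blk f g L gam G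
    using f_block f_grad L_nonneg f_Lip G_proper G_lsc gam_pos gam_bound by unfold_locales
  have PhiE: "Phi = bs.Phi" by (simp add: Phi_def bs.Phi_def fun_eq_iff)
  obtain y0 where y0: "\<And>u. bs.Phi y0 \<le> bs.Phi u" using argmin_ne unfolding PhiE by blast
  have BS: "bseq blk f g L gam G (\<lambda>k. x k w) (\<lambda>k. z k w) (\<lambda>k. I k w) y0" if w: "w \<in> space M" for w
    by (unfold_locales) (use z_in_T[OF w] x_update[OF w] y0 in auto)
  define H where "H k i w = (\<Sum>j\<in>UNIV. if blk j = i then (z k w $ j - x k w $ j)\<^sup>2 else 0)" for k i w
  define mm where "mm = Fsep f y0 + real_of_ereal (G y0)"
  define Bc where "Bc = (real_of_ereal (FBE f g G blk gam x0) - mm) / bs.cc"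
  have Hnn: "0 \<le> H k i w" for k i w unfolding H_def by (rule sum_nonneg) auto
  have Hsum: "(\<Sum>i\<in>UNIV. H k i w) = (norm (x k w - z k w))\<^sup>2" for k w
  proof -
    have "(\<Sum>i\<in>UNIV. H k i w) = (\<Sum>j\<in>UNIV. (z k w $ j - x k w $ j)\<^sup>2)"
      unfolding H_def by (rule bs.swap_blk)
    also have "\<dots> = (norm (z k w - x k w))\<^sup>2" by (simp add: norm2_vec)
    finally show ?thesis by (simp add: norm_minus_commute)
  qed
  have Hm: "H k i \<in> borel_measurable (Fk k)" for k i
  proof -
    have nth: "(\<lambda>v::real^'n. v $ j) \<in> borel_measurable borel" for j
      by (rule borel_measurable_continuous_onI) (intro continuous_on_component continuous_on_id)
    have [measurable]: "(\<lambda>w. x k w $ j) \<in> borel_measurable (Fk k)" "(\<lambda>w. z k w $ j) \<in> borel_measurable (Fk k)" for j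
      using measurable_compose[OF x_meas nth] measurable_compose[OF z_meas nth] by (auto simp: o_def)
    show ?thesis unfolding H_def
      by (intro borel_measurable_sum) (auto intro!: borel_measurable_power borel_measurable_diff)
  qed
  have bnd: "(\<Sum>k<n. \<Sum>i\<in>UNIV. if i \<in> I (Suc k) w then H k i w else 0) \<le> Bc" if w: "w \<in> space M" for w n
  proof -
    interpret b: bseq blk f g L gam G "\<lambda>k. x k w" "\<lambda>k. z k w" "\<lambda>k. I k w" y0 by (rule BS[OF w])
    have Eeq: "b.E k = (\<Sum>i\<in>UNIV. if i \<in> I (Suc k) w then H k i w else 0)" for k
    proof -
      have "(\<Sum>i\<in>UNIV. if i \<in> I (Suc k) w then H k i w else 0)
          = (\<Sum>i\<in>UNIV. \<Sum>j\<in>UNIV. if blk j = i then (if blk j \<in> I (Suc k) w then (z k w $ j - x k w $ j)\<^sup>2 else 0) else 0)"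
        unfolding H_def by (rule sum.cong) (auto intro!: sum.cong sum.neutral)
      also have "\<dots> = b.E k" unfolding b.E_def by (rule bs.swap_blk)
      finally show ?thesis by simp
    qed
    have V0: "b.V 0 = real_of_ereal (FBE f g G blk gam x0)" using b.FBE_V[of 0] x_init by simp
    have "bs.cc * (\<Sum>k<n. b.E k) \<le> b.V 0 - b.m" by (rule b.E_sum)
    hence "bs.cc * (\<Sum>k<n. b.E k) \<le> real_of_ereal (FBE f g G blk gam x0) - mm"
      by (simp add: V0 b.m_def mm_def)
    thus ?thesis using bs.cc_pos by (simp add: Eeq Bc_def field_simps)
  qed
  have AEs: "AE w in M. summable (\<lambda>k. \<Sum>i\<in>UNIV. H k i w)"
    by (rule prob_summable[OF M_prob Fk_sub Hm Hnn I_meas sampling p_pos bnd])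
  have AEsp: "AE w in M. w \<in> space M" by (rule AE_space)
  show ?thesis
    using AEs AEsp
  proof (eventually_elim)
    case (elim w)
    interpret b: bseq blk f g L gam G "\<lambda>k. x k w" "\<lambda>k. z k w" "\<lambda>k. I k w" y0 by (rule BS[OF elim(2)])
    have summ: "summable (\<lambda>k. (norm (x k w - z k w))\<^sup>2)" using elim(1) by (simp add: Hsum)
    show ?case using summ b.limit_part[OF summ] unfolding PhiE by simp
  qed
qed

end
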